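(* Let $f(x,y)=\left(x+\frac1y,\ y-\frac1y-x\right)$ be the Hénon–Devaney map. For $n\ge1$ let $U_n$ be the set of $t\in\mathbb{R}$ such that $f^{k}(t,-t)$ is defined and does not lie on $\{y=0\}$ for every $k=0,1,\dots,n-1$ (so that $f^{n}(t,-t)$ is defined), and write $f^{n}(t,-t)=(f^n_x(t,-t),f^n_y(t,-t))$. Then for every $n\ge1$: (a) on each connected component of $U_n$, $t\mapsto f^n_x(t,-t)$ is increasing and $t\mapsto f^n_y(t,-t)$ is decreasing; (b) $f^{n-1}(\{y=-x\})\cap f^{n}(\{y=-x\})=\emptyset$, where $f^{k}(\{y=-x\})=\{f^k(t,-t):t\in U_k\}$ for $k\ge1$ and $f^0(\{y=-x\})=\{y=-x\}$. *)

theory Defs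
  imports "HOL-Analysis.Analysis"
begin

text \<open>It is only meaningful
  for y \<noteq> 0; Isabelle's total division is harmless because we only ever evaluate
  iterates at parameters in U n, where all intermediate y-coordinates are nonzero.\<close>
definition henon :: "real \<times> real \<Rightarrow> real \<times> real" where
  "henon p = (fst p + 1 / snd p, snd p - 1 / snd p - fst p)"

definition U :: "nat \<Rightarrow> real set" where
  "U n = {t. \<forall>k<n. snd ((henon ^^ k) (t, -t)) \<noteq> 0}"

definition line_image :: "nat \<Rightarrow> (real \<times> real) set" where
  "line_image n = (\<lambda>t. (henon ^^ n) (t, -t)) ` U n"

end

theory Submission
  imports Defs
begin

lemma henon_Suc: "(henon ^^ Suc k) p = henon ((henon ^^ k) p)"
  by simp

lemma U_mono: "m \<le> n \<Longrightarrow> t \<in> U n \<Longrightarrow> t \<in> U m"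
  unfolding U_def by auto

lemma henon_inj:
  assumes "snd p \<noteq> 0" "snd q \<noteq> 0" "henon p = henon q"
  shows "p = q"
proof -
  have "fst (henon p) + snd (henon p) = snd p" "fst (henon q) + snd (henon q) = snd q"
    by (simp_all add: henon_def)
  with assms(3) have e: "snd p = snd q" by simp
  from assms(3) have "fst p + 1 / snd p = fst q + 1 / snd q"
    by (simp add: henon_def prod_eq_iff)
  with e have "fst p = fst q" by simp
  with e show ?thesis by (simp add: prod_eq_iff)
qed

lemma disj_step:
  "s \<in> U m \<Longrightarrow> t \<in> U (Suc m) \<Longrightarrow> (henon ^^ m) (s, -s) \<noteq> (henon ^^ Suc m) (t, -t)"
proof (induction m arbitrary: s t)
  case 0
  then have "t \<noteq> 0" by (auto simp: U_def)
  then show ?case by (auto simp: henon_def prod_eq_iff)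
next
  case (Suc m)
  have a: "snd ((henon ^^ m) (s, -s)) \<noteq> 0" using Suc.prems(1) by (auto simp: U_def)
  have b: "snd ((henon ^^ Suc m) (t, -t)) \<noteq> 0" using Suc.prems(2) by (auto simp: U_def)
  have "s \<in> U m" "t \<in> U (Suc m)" using Suc.prems U_mono[of m "Suc m"] U_mono[of "Suc m" "Suc (Suc m)"] by auto
  with Suc.IH have "(henon ^^ m) (s, -s) \<noteq> (henon ^^ Suc m) (t, -t)" by blast
  then show ?case using henon_inj[OF a b]
    by (metis henon_Suc)
qed

lemma cont:
  "k \<le> n \<Longrightarrow> continuous_on (U n) (\<lambda>t. (henon ^^ k) (t, -t))"
proof (induction k)
  case 0
  then show ?case by (simp add: continuous_intros)
next
  case (Suc k)
  then have c: "continuous_on (U n) (\<lambda>t. (henon ^^ k) (t, -t))" by simp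
  have nz: "\<And>t. t \<in> U n \<Longrightarrow> snd ((henon ^^ k) (t, -t)) \<noteq> 0"
    using Suc.prems by (auto simp: U_def)
  have "continuous_on (U n) (\<lambda>t. (fst ((henon ^^ k) (t, -t)) + 1 / snd ((henon ^^ k) (t, -t)),
      snd ((henon ^^ k) (t, -t)) - 1 / snd ((henon ^^ k) (t, -t)) - fst ((henon ^^ k) (t, -t))))"
    using c nz by (intro continuous_intros) auto
  then show ?case unfolding henon_Suc by (simp only: henon_def)
qed

lemma mono_part:
  assumes C: "C \<in> components (U n)" and st: "s \<in> C" "t \<in> C" "s < t"
  shows "k \<le> n \<Longrightarrow> fst ((henon ^^ k) (s, -s)) < fst ((henon ^^ k) (t, -t)) \<and>
            snd ((henon ^^ k) (s, -s)) > snd ((henon ^^ k) (t, -t))"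
proof (induction k)
  case 0
  then show ?case using st by simp
next
  case (Suc k)
  define g where "g = (\<lambda>t. snd ((henon ^^ k) (t, -t)))"
  have sub: "C \<subseteq> U n" using C in_components_subset by blast
  have conn: "connected C" using C in_components_connected by blast
  have "continuous_on (U n) (\<lambda>t. (henon ^^ k) (t, -t))" using Suc.prems cont by simp
  then have "continuous_on C g" unfolding g_def
    by (intro continuous_intros) (rule continuous_on_subset[OF _ sub])
  then have ci: "connected (g ` C)" using conn connected_continuous_image by blast
  have nz: "\<And>u. u \<in> C \<Longrightarrow> g u \<noteq> 0" using sub Suc.prems unfolding g_def U_def by auto
  have same: "(g s > 0 \<and> g t > 0) \<or> (g s < 0 \<and> g t < 0)"
  proof (rule ccontr)
    assume "\<not> ?thesis"
    then have "(g s < 0 \<and> g t > 0) \<or> (g s > 0 \<and> g t < 0)" using nz st by force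
    then have "0 \<in> g ` C"
    proof
      assume "g s < 0 \<and> g t > 0"
      then show ?thesis using connectedD_interval[OF ci, of "g s" "g t" 0] st by auto
    next
      assume "g s > 0 \<and> g t < 0"
      then show ?thesis using connectedD_interval[OF ci, of "g t" "g s" 0] st by auto
    qed
    then show False using nz by auto
  qed
  have IH: "fst ((henon ^^ k) (s, -s)) < fst ((henon ^^ k) (t, -t))" "g s > g t"
    using Suc unfolding g_def by auto
  have inv: "1 / g s < 1 / g t" using same IH(2)
    by (auto simp: divide_simps)
  show ?case unfolding henon_Suc using IH inv unfolding g_def henon_def by (simp del: funpow.simps)
qed

theorem mainTheorem5:
  fixes n :: nat
  assumes "n \<ge> 1"
  shows "(\<forall>C \<in> components (U n). \<forall>s\<in>C. \<forall>t\<in>C. s < t \<longrightarrow>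
            fst ((henon ^^ n) (s, -s)) < fst ((henon ^^ n) (t, -t)) \<and>
            snd ((henon ^^ n) (s, -s)) > snd ((henon ^^ n) (t, -t)))
       \<and> line_image (n - 1) \<inter> line_image n = {}"
proof
  show "\<forall>C \<in> components (U n). \<forall>s\<in>C. \<forall>t\<in>C. s < t \<longrightarrow>
            fst ((henon ^^ n) (s, -s)) < fst ((henon ^^ n) (t, -t)) \<and>
            snd ((henon ^^ n) (s, -s)) > snd ((henon ^^ n) (t, -t))"
    using mono_part by blast
  obtain m where n: "n = Suc m" using assms by (cases n) auto
  show "line_image (n - 1) \<inter> line_image n = {}"
    unfolding n line_image_def using disj_step[of _ m] by (fastforce simp del: funpow.simps)
qed

end
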